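(* Let $G=(V,E)$ be a finite Eulerian graph (every vertex has even degree; $G$ need not be connected). For $A\subseteq E$ let $\varepsilon(A)$ denote the number of Eulerian orientations of the graph $(V,A)$ and let $h(A)$ denote the number of half graphs of $(V,A)$. Then $$\varepsilon(G)^2=\sum_{A\subseteq E}\varepsilon(A)\,\varepsilon(E\setminus A)\qquad\text{and}\qquad h(G)^2=\sum_{A\subseteq E}h(A)\,h(E\setminus A),$$ where $\varepsilon(G)=\varepsilon(E)$ and $h(G)=h(E)$.
   Context: An Eulerian orientation of a graph is an orientation of its edges in which every vertex has in-degree equal to its out-degree. A half graph of a graph $F=(V,A)$ is a subset $S\subseteq A$ of edges such that for every vertex $v$ the number of edges of $S$ incident to $v$ equals $d_F(v)/2$, where $d_F(v)$ is the degree of $v$ in $F$. (If some vertex has odd degree in $(V,A)$, then $\varepsilon(A)=h(A)=0$.) *)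

theory Defs
  imports "HOL-Library.FuncSet"
begin

text \<open>Finite multigraphs (multiple edges and loops allowed): an abstract edge set E,
  each edge e having the (unordered) end pair given by the components of ends e.\<close>

definition deg :: "('e \<Rightarrow> 'v \<times> 'v) \<Rightarrow> 'e set \<Rightarrow> 'v \<Rightarrow> nat" where
  "deg ends A v = card {e \<in> A. fst (ends e) = v} + card {e \<in> A. snd (ends e) = v}"

text \<open>An orientation of the edges A: ori e = True means e is directed from fst (ends e)
  to snd (ends e), ori e = False means the reverse.\<close>

definition outdeg :: "('e \<Rightarrow> 'v \<times> 'v) \<Rightarrow> 'e set \<Rightarrow> ('e \<Rightarrow> bool) \<Rightarrow> 'v \<Rightarrow> nat" where
  "outdeg ends A ori v = card {e \<in> A. (ori e \<and> fst (ends e) = v) \<or> (\<not> ori e \<and> snd (ends e) = v)}"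

definition indeg :: "('e \<Rightarrow> 'v \<times> 'v) \<Rightarrow> 'e set \<Rightarrow> ('e \<Rightarrow> bool) \<Rightarrow> 'v \<Rightarrow> nat" where
  "indeg ends A ori v = card {e \<in> A. (ori e \<and> snd (ends e) = v) \<or> (\<not> ori e \<and> fst (ends e) = v)}"

definition eulerian_orientations ::
  "'v set \<Rightarrow> ('e \<Rightarrow> 'v \<times> 'v) \<Rightarrow> 'e set \<Rightarrow> ('e \<Rightarrow> bool) set" where
  "eulerian_orientations V ends A =
     {ori \<in> A \<rightarrow>\<^sub>E (UNIV :: bool set). \<forall>v\<in>V. outdeg ends A ori v = indeg ends A ori v}"

definition num_eul_or :: "'v set \<Rightarrow> ('e \<Rightarrow> 'v \<times> 'v) \<Rightarrow> 'e set \<Rightarrow> nat" where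
  "num_eul_or V ends A = card (eulerian_orientations V ends A)"

definition half_graphs :: "'v set \<Rightarrow> ('e \<Rightarrow> 'v \<times> 'v) \<Rightarrow> 'e set \<Rightarrow> 'e set set" where
  "half_graphs V ends A = {S. S \<subseteq> A \<and> (\<forall>v\<in>V. 2 * deg ends S v = deg ends A v)}"

definition num_half :: "'v set \<Rightarrow> ('e \<Rightarrow> 'v \<times> 'v) \<Rightarrow> 'e set \<Rightarrow> nat" where
  "num_half V ends A = card (half_graphs V ends A)"

end

theory Submission
  imports Defs
begin

definition sg :: "bool \<Rightarrow> int" where "sg b = (if b then 1 else -1)"

definition good :: "'v set \<Rightarrow> ('e \<Rightarrow> 'v \<Rightarrow> int) \<Rightarrow> 'e set \<Rightarrow> ('e \<Rightarrow> bool) set" where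
  "good V c A = {f \<in> A \<rightarrow>\<^sub>E (UNIV::bool set). \<forall>v\<in>V. (\<Sum>e\<in>A. sg (f e) * c e v) = 0}"

lemma good_finite: "finite A \<Longrightarrow> finite (good V c A)"
  unfolding good_def by (rule finite_subset[of _ "A \<rightarrow>\<^sub>E (UNIV::bool set)"]) (auto intro: finite_PiE)

lemma good_main:
  fixes E :: "'e set" and V :: "'v set" and c :: "'e \<Rightarrow> 'v \<Rightarrow> int"
  assumes fin: "finite E"
  shows "card (good V c E)^2 = (\<Sum>A\<in>Pow E. card (good V c A) * card (good V c (E - A)))"
proof -
  let ?S = "SIGMA A:Pow E. good V c A \<times> good V c (E - A)"
  define F where "F = (\<lambda>(f::'e\<Rightarrow>bool, g::'e\<Rightarrow>bool). let A = {e\<in>E. f e = g e} in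
      (A, (restrict f A, restrict f (E - A))))"
  define G where "G = (\<lambda>(A, (a::'e\<Rightarrow>bool, b::'e\<Rightarrow>bool)).
      ((\<lambda>e. if e \<in> A then a e else b e), (\<lambda>e. if e \<in> A then a e else if e \<in> E then \<not> b e else undefined)))"
  have split: "(\<Sum>e\<in>E. h e) = (\<Sum>e\<in>A. h e) + (\<Sum>e\<in>E - A. h e)" if "A \<subseteq> E" for A and h :: "'e \<Rightarrow> int"
    using that fin by (metis add.commute sum.subset_diff)
  have bij: "bij_betw F (good V c E \<times> good V c E) ?S"
  proof (rule bij_betw_byWitness[where f'=G])
    show "\<forall>a\<in>good V c E \<times> good V c E. G (F a) = a"
    proof
      fix p assume p: "p \<in> good V c E \<times> good V c E"
      obtain f g where fg: "p = (f, g)" by (cases p)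
      have f: "f \<in> E \<rightarrow>\<^sub>E UNIV" and g: "g \<in> E \<rightarrow>\<^sub>E UNIV" using p fg by (auto simp: good_def)
      have "G (F p) = (f, g)"
        unfolding fg F_def G_def Let_def
        using f g by (auto simp: fun_eq_iff PiE_def extensional_def)
      then show "G (F p) = p" using fg by simp
    qed
    show "\<forall>a'\<in>?S. F (G a') = a'"
    proof
      fix q assume q: "q \<in> ?S"
      obtain A a b where q': "q = (A, (a, b))" by (metis prod.collapse)
      have A: "A \<subseteq> E" and a: "a \<in> A \<rightarrow>\<^sub>E UNIV" and b: "b \<in> (E - A) \<rightarrow>\<^sub>E UNIV"
        using q q' by (auto simp: good_def)
      have eqA: "{e \<in> E. (if e \<in> A then a e else b e) =
          (if e \<in> A then a e else if e \<in> E then \<not> b e else undefined)} = A"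
        using A by auto
      show "F (G q) = q" unfolding q' G_def F_def Let_def
        using a b A by (simp only: prod.case eqA) (auto simp: fun_eq_iff PiE_def extensional_def)
    qed
    show "F ` (good V c E \<times> good V c E) \<subseteq> ?S"
    proof
      fix q assume "q \<in> F ` (good V c E \<times> good V c E)"
      then obtain f g where f: "f \<in> good V c E" and g: "g \<in> good V c E" and q: "q = F (f, g)" by auto
      define A where "A = {e\<in>E. f e = g e}"
      have AE: "A \<subseteq> E" unfolding A_def by auto
      have zero: "(\<Sum>e\<in>A. sg (f e) * c e v) = 0 \<and> (\<Sum>e\<in>E - A. sg (f e) * c e v) = 0" if v: "v \<in> V" for v
      proof -
        have 1: "(\<Sum>e\<in>E. sg (f e) * c e v) = 0" using f v by (auto simp: good_def)
        have 2: "(\<Sum>e\<in>E. sg (g e) * c e v) = 0" using g v by (auto simp: good_def)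
        have 3: "(\<Sum>e\<in>A. sg (g e) * c e v) = (\<Sum>e\<in>A. sg (f e) * c e v)"
          by (rule sum.cong) (auto simp: A_def)
        have 4: "(\<Sum>e\<in>E - A. sg (g e) * c e v) = - (\<Sum>e\<in>E - A. sg (f e) * c e v)"
          unfolding sum_negf[symmetric]
          by (rule sum.cong) (auto simp: A_def sg_def)
        show ?thesis using 1 2 3 4 split[OF AE, of "\<lambda>e. sg (f e) * c e v"]
          split[OF AE, of "\<lambda>e. sg (g e) * c e v"] by linarith
      qed
      have r1: "restrict f A \<in> good V c A"
        unfolding good_def using zero by (auto simp: sum.cong[OF refl, of A "\<lambda>e. sg (restrict f A e) * c e _"])
      have r2: "restrict f (E - A) \<in> good V c (E - A)"
        unfolding good_def using zero by auto
      have "F (f, g) = (A, (restrict f A, restrict f (E - A)))" unfolding F_def A_def Let_def by simp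
      then show "q \<in> ?S" using q r1 r2 AE by auto
    qed
    show "G ` ?S \<subseteq> good V c E \<times> good V c E"
    proof
      fix p assume "p \<in> G ` ?S"
      then obtain A a b where A: "A \<subseteq> E" and a: "a \<in> good V c A" and b: "b \<in> good V c (E - A)"
        and p: "p = G (A, (a, b))" by auto
      define f where "f = (\<lambda>e. if e \<in> A then a e else b e)"
      define g where "g = (\<lambda>e. if e \<in> A then a e else if e \<in> E then \<not> b e else undefined)"
      have pe: "p = (f, g)" unfolding p G_def f_def g_def by simp
      have aP: "a \<in> A \<rightarrow>\<^sub>E UNIV" and bP: "b \<in> (E - A) \<rightarrow>\<^sub>E UNIV" using a b by (auto simp: good_def)
      have fP: "f \<in> E \<rightarrow>\<^sub>E UNIV" using aP bP A unfolding f_def by (auto simp: PiE_def extensional_def)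
      have gP: "g \<in> E \<rightarrow>\<^sub>E UNIV" using aP bP A unfolding g_def by (auto simp: PiE_def extensional_def)
      have "(\<Sum>e\<in>E. sg (f e) * c e v) = 0 \<and> (\<Sum>e\<in>E. sg (g e) * c e v) = 0" if v: "v \<in> V" for v
      proof -
        have za: "(\<Sum>e\<in>A. sg (a e) * c e v) = 0" using a v by (auto simp: good_def)
        have zb: "(\<Sum>e\<in>E - A. sg (b e) * c e v) = 0" using b v by (auto simp: good_def)
        have fa: "(\<Sum>e\<in>A. sg (f e) * c e v) = (\<Sum>e\<in>A. sg (a e) * c e v)"
          by (rule sum.cong) (auto simp: f_def)
        have fb: "(\<Sum>e\<in>E - A. sg (f e) * c e v) = (\<Sum>e\<in>E - A. sg (b e) * c e v)"
          by (rule sum.cong) (auto simp: f_def)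
        have ga: "(\<Sum>e\<in>A. sg (g e) * c e v) = (\<Sum>e\<in>A. sg (a e) * c e v)"
          by (rule sum.cong) (auto simp: g_def)
        have gb: "(\<Sum>e\<in>E - A. sg (g e) * c e v) = - (\<Sum>e\<in>E - A. sg (b e) * c e v)"
          unfolding sum_negf[symmetric]
          by (rule sum.cong) (auto simp: g_def sg_def)
        show ?thesis using za zb fa fb ga gb split[OF A, of "\<lambda>e. sg (f e) * c e v"]
          split[OF A, of "\<lambda>e. sg (g e) * c e v"] by linarith
      qed
      then show "p \<in> good V c E \<times> good V c E" using pe fP gP by (auto simp: good_def)
    qed
  qed
  have "card (good V c E)^2 = card (good V c E \<times> good V c E)"
    by (simp add: power2_eq_square card_cartesian_product)
  also have "\<dots> = card ?S" using bij_betw_same_card[OF bij] .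
  also have "\<dots> = (\<Sum>A\<in>Pow E. card (good V c A \<times> good V c (E - A)))"
    by (rule card_SigmaI) (use fin in \<open>auto intro!: good_finite finite_cartesian_product dest: finite_subset\<close>)
  also have "\<dots> = (\<Sum>A\<in>Pow E. card (good V c A) * card (good V c (E - A)))"
    by (simp add: card_cartesian_product)
  finally show ?thesis .
qed


lemma card_int: "finite A \<Longrightarrow> int (card {e\<in>A. P e}) = (\<Sum>e\<in>A. if P e then 1 else 0)"
proof -
  assume f: "finite A"
  have "(\<Sum>e\<in>A. if P e then 1 else 0 :: int) = (\<Sum>e\<in>{e\<in>A. P e}. 1)"
    using f by (simp only: sum.inter_filter)
  also have "\<dots> = int (card {e\<in>A. P e})" by simp
  finally show ?thesis by simp
qed

lemma sum_int_restrict: "finite A \<Longrightarrow> S \<subseteq> A \<Longrightarrow> (\<Sum>e\<in>S. h e) = (\<Sum>e\<in>A. if e \<in> S then h e else (0::int))"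
proof -
  assume "finite A" "S \<subseteq> A"
  then have "S = {e\<in>A. e \<in> S}" by auto
  then show ?thesis using \<open>finite A\<close> by (metis sum.inter_filter)
qed

lemma eul_good:
  assumes "finite A"
  shows "eulerian_orientations V ends A =
    good V (\<lambda>e v. of_bool (fst (ends e) = v) - of_bool (snd (ends e) = v)) A"
proof -
  have "(outdeg ends A ori v = indeg ends A ori v) \<longleftrightarrow>
     (\<Sum>e\<in>A. sg (ori e) * (of_bool (fst (ends e) = v) - of_bool (snd (ends e) = v))) = 0" for ori v
  proof -
    have "(outdeg ends A ori v = indeg ends A ori v) \<longleftrightarrow>
        int (outdeg ends A ori v) - int (indeg ends A ori v) = 0" by linarith
    also have "int (outdeg ends A ori v) - int (indeg ends A ori v) =
       (\<Sum>e\<in>A. sg (ori e) * (of_bool (fst (ends e) = v) - of_bool (snd (ends e) = v)))"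
      unfolding outdeg_def indeg_def card_int[OF assms] sum_subtractf[symmetric]
      by (rule sum.cong) (auto simp: sg_def)
    finally show ?thesis .
  qed
  then show ?thesis unfolding eulerian_orientations_def good_def by auto
qed

lemma half_good:
  assumes "finite A"
  shows "num_half V ends A =
    card (good V (\<lambda>e v. of_bool (fst (ends e) = v) + of_bool (snd (ends e) = v)) A)"
proof -
  define c2 where "c2 = (\<lambda>e v. of_bool (fst (ends e) = v) + (of_bool (snd (ends e) = v) :: int))"
  have degS: "int (deg ends S v) = (\<Sum>e\<in>S. c2 e v)" if "finite S" for S v
    unfolding deg_def c2_def of_nat_add card_int[OF that] sum.distrib[symmetric]
    by (rule sum.cong) auto
  have key: "(2 * deg ends S v = deg ends A v) \<longleftrightarrow> (\<Sum>e\<in>A. sg (e \<in> S) * c2 e v) = 0"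
    if S: "S \<subseteq> A" for S v
  proof -
    have fS: "finite S" using S assms by (rule finite_subset)
    have "(2 * deg ends S v = deg ends A v) \<longleftrightarrow> 2 * int (deg ends S v) - int (deg ends A v) = 0" by linarith
    also have "2 * int (deg ends S v) - int (deg ends A v) = (\<Sum>e\<in>A. sg (e \<in> S) * c2 e v)"
      unfolding degS[OF fS] degS[OF assms] sum_int_restrict[OF assms S] sum_distrib_left sum_subtractf[symmetric]
      by (rule sum.cong) (auto simp: sg_def)
    finally show ?thesis .
  qed
  have "bij_betw (\<lambda>S. restrict (\<lambda>e. e \<in> S) A) (half_graphs V ends A) (good V c2 A)"
  proof (rule bij_betw_byWitness[where f'="\<lambda>f. {e\<in>A. f e}"])
    show "\<forall>S\<in>half_graphs V ends A. {e \<in> A. restrict (\<lambda>e. e \<in> S) A e} = S"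
      unfolding half_graphs_def by auto
    show "\<forall>f\<in>good V c2 A. restrict (\<lambda>e. e \<in> {e \<in> A. f e}) A = f"
      unfolding good_def by (auto simp: fun_eq_iff PiE_def extensional_def)
    show "(\<lambda>S. restrict (\<lambda>e. e \<in> S) A) ` half_graphs V ends A \<subseteq> good V c2 A"
    proof
      fix f assume "f \<in> (\<lambda>S. restrict (\<lambda>e. e \<in> S) A) ` half_graphs V ends A"
      then obtain S where S: "S \<in> half_graphs V ends A" and f: "f = restrict (\<lambda>e. e \<in> S) A" by auto
      have SA: "S \<subseteq> A" using S by (auto simp: half_graphs_def)
      have "(\<Sum>e\<in>A. sg (f e) * c2 e v) = (\<Sum>e\<in>A. sg (e \<in> S) * c2 e v)" for v
        by (rule sum.cong) (auto simp: f)
      then show "f \<in> good V c2 A" using S key[OF SA] unfolding good_def half_graphs_def f by auto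
    qed
    show "(\<lambda>f. {e \<in> A. f e}) ` good V c2 A \<subseteq> half_graphs V ends A"
    proof
      fix S assume "S \<in> (\<lambda>f. {e \<in> A. f e}) ` good V c2 A"
      then obtain f where f: "f \<in> good V c2 A" and S: "S = {e \<in> A. f e}" by auto
      have SA: "S \<subseteq> A" using S by auto
      have "(\<Sum>e\<in>A. sg (f e) * c2 e v) = (\<Sum>e\<in>A. sg (e \<in> S) * c2 e v)" for v
        by (rule sum.cong) (auto simp: S)
      then show "S \<in> half_graphs V ends A" using f key[OF SA] SA unfolding good_def half_graphs_def by auto
    qed
  qed
  then show ?thesis unfolding num_half_def c2_def by (rule bij_betw_same_card)
qed

theorem theorem1p1:
  fixes V :: "'v set" and E :: "'e set" and ends :: "'e \<Rightarrow> 'v \<times> 'v"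
  assumes "finite V" and "finite E"
    and "\<forall>e\<in>E. fst (ends e) \<in> V \<and> snd (ends e) \<in> V"
    and "\<forall>v\<in>V. even (deg ends E v)"
  shows "(num_eul_or V ends E)^2 =
           (\<Sum>A\<in>Pow E. num_eul_or V ends A * num_eul_or V ends (E - A)) \<and>
         (num_half V ends E)^2 =
           (\<Sum>A\<in>Pow E. num_half V ends A * num_half V ends (E - A))"
proof
  have fA: "finite A" "finite (E - A)" if "A \<in> Pow E" for A
    using that assms(2) finite_subset by auto
  show "(num_eul_or V ends E)^2 =
           (\<Sum>A\<in>Pow E. num_eul_or V ends A * num_eul_or V ends (E - A))"
    unfolding num_eul_or_def eul_good[OF assms(2)] good_main[OF assms(2)]
  proof (rule sum.cong[OF refl])
    fix A assume a: "A \<in> Pow E"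
    show "card (good V (\<lambda>e v. of_bool (fst (ends e) = v) - of_bool (snd (ends e) = v)) A) *
      card (good V (\<lambda>e v. of_bool (fst (ends e) = v) - of_bool (snd (ends e) = v)) (E - A)) =
      card (eulerian_orientations V ends A) * card (eulerian_orientations V ends (E - A))"
      by (simp only: eul_good[OF fA(1)[OF a], where V=V and ends=ends] eul_good[OF fA(2)[OF a], where V=V and ends=ends])
  qed
  show "(num_half V ends E)^2 =
           (\<Sum>A\<in>Pow E. num_half V ends A * num_half V ends (E - A))"
    unfolding half_good[OF assms(2)] good_main[OF assms(2)]
  proof (rule sum.cong[OF refl])
    fix A assume a: "A \<in> Pow E"
    show "card (good V (\<lambda>e v. of_bool (fst (ends e) = v) + of_bool (snd (ends e) = v)) A) *
      card (good V (\<lambda>e v. of_bool (fst (ends e) = v) + of_bool (snd (ends e) = v)) (E - A)) =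
      num_half V ends A * num_half V ends (E - A)"
      by (simp only: half_good[OF fA(1)[OF a], where V=V and ends=ends] half_good[OF fA(2)[OF a], where V=V and ends=ends])
  qed
qed

end
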